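(* Fix $0<d<1$ and let $c(x)=x^d$. For every positive integer $h$ there exists a game with $n=h^2+h$ jobs and cost function $c$, and a Nash equilibrium $s$ of that game, such that $\frac{C(s)}{C(s^* )}=\Omega\!\left(h^{1-d}\right)=\Omega\!\left(n^{(1-d)/2}\right)$, where $s^*$ is an optimal assignment of that game.
   Context: A game is specified by a cost function $c$ (here $c(x)=x^d$, $c(0)=0$), a time horizon $T$ with slots $t=1,\dots,T$, and a set of jobs, each job $j$ having integer release time $r_j$ and integer deadline $d_j$ with $0<r_j<d_j<T$. An assignment $s$ gives each job $j$ a slot $s_j$ with $r_j\le s_j<d_j$. The load of slot $t$ is $l_t(s)=|\{j:s_j=t\}|$ and $C(s)=\sum_{t=1}^T c(l_t(s))$. An assignment $s$ is a Nash equilibrium if for every job $j$ and every slot $t\neq s_j$ with $r_j\le t<d_j$: $\frac{c(l_{s_j}(s))}{l_{s_j}(s)}\le\frac{c(l_t(s)+1)}{l_t(s)+1}$. An optimal assignment is one minimizing $C$ over all assignments. *)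

theory Defs
  imports Complex_Main
begin

definition cst :: "real \<Rightarrow> nat \<Rightarrow> real" where
  "cst d x = (if x = 0 then 0 else (real x) powr d)"

definition valid_game :: "nat \<Rightarrow> nat \<Rightarrow> (nat \<Rightarrow> nat) \<Rightarrow> (nat \<Rightarrow> nat) \<Rightarrow> bool" where
  "valid_game T n r dl = (\<forall>j<n. 0 < r j \<and> r j < dl j \<and> dl j < T)"

definition is_assignment :: "nat \<Rightarrow> (nat \<Rightarrow> nat) \<Rightarrow> (nat \<Rightarrow> nat) \<Rightarrow> (nat \<Rightarrow> nat) \<Rightarrow> bool" where
  "is_assignment n r dl s = (\<forall>j<n. r j \<le> s j \<and> s j < dl j)"

definition load :: "nat \<Rightarrow> (nat \<Rightarrow> nat) \<Rightarrow> nat \<Rightarrow> nat" where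
  "load n s t = card {j. j < n \<and> s j = t}"

definition total_cost :: "real \<Rightarrow> nat \<Rightarrow> nat \<Rightarrow> (nat \<Rightarrow> nat) \<Rightarrow> real" where
  "total_cost d T n s = (\<Sum>t = 1..T. cst d (load n s t))"

definition is_nash :: "real \<Rightarrow> nat \<Rightarrow> (nat \<Rightarrow> nat) \<Rightarrow> (nat \<Rightarrow> nat) \<Rightarrow> (nat \<Rightarrow> nat) \<Rightarrow> bool" where
  "is_nash d n r dl s = (is_assignment n r dl s \<and>
     (\<forall>j<n. \<forall>t. t \<noteq> s j \<and> r j \<le> t \<and> t < dl j \<longrightarrow>
        cst d (load n s (s j)) / real (load n s (s j))
          \<le> cst d (load n s t + 1) / real (load n s t + 1)))"

definition is_optimal :: "real \<Rightarrow> nat \<Rightarrow> nat \<Rightarrow> (nat \<Rightarrow> nat) \<Rightarrow> (nat \<Rightarrow> nat) \<Rightarrow> (nat \<Rightarrow> nat) \<Rightarrow> bool" where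
  "is_optimal d T n r dl s = (is_assignment n r dl s \<and>
     (\<forall>s'. is_assignment n r dl s' \<longrightarrow> total_cost d T n s \<le> total_cost d T n s'))"

end

theory Submission
  imports Defs
begin

lemma sum_load:
  assumes "\<forall>j<n. s j \<in> A" "finite A"
  shows "(\<Sum>t\<in>A. load n s t) = n"
proof -
  have "(\<Sum>t\<in>A. load n s t) = card (\<Union>t\<in>A. {j. j < n \<and> s j = t})"
    unfolding load_def by (rule card_UN_disjoint[symmetric]) (auto simp: assms)
  also have "(\<Union>t\<in>A. {j. j < n \<and> s j = t}) = {..<n}" using assms by auto
  finally show ?thesis by simp
qed

lemma cst_lb:
  assumes "0 < d" "d < 1" "l \<le> M" "0 < M"
  shows "real M powr (d - 1) * real l \<le> cst d l"
proof (cases "l = 0")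
  case True then show ?thesis by (simp add: cst_def)
next
  case False
  have "real l powr d = real l powr (d - 1) * real l"
    using False by (simp add: powr_diff)
  moreover have "real M powr (d - 1) \<le> real l powr (d - 1)"
    using assms False by (intro powr_mono2') auto
  ultimately show ?thesis using False by (simp add: cst_def mult_right_mono)
qed

lemma cost_lb:
  assumes "0 < d" "d < 1" "\<forall>j<n. 1 \<le> s j \<and> s j \<le> T"
    "\<forall>j<n. load n s (s j) \<le> M" "0 < M"
  shows "real M powr (d - 1) * real n \<le> total_cost d T n s"
proof -
  have "\<And>t. real M powr (d - 1) * real (load n s t) \<le> cst d (load n s t)"
  proof -
    fix t
    show "real M powr (d - 1) * real (load n s t) \<le> cst d (load n s t)"
    proof (cases "load n s t = 0")
      case True then show ?thesis by (simp add: cst_def)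
    next
      case False
      then have "{j. j < n \<and> s j = t} \<noteq> {}" unfolding load_def by (metis card.empty)
      then obtain j where "j < n" "s j = t" by auto
      then have "load n s t \<le> M" using assms(4) by auto
      then show ?thesis using cst_lb assms by auto
    qed
  qed
  then have "(\<Sum>t=1..T. real M powr (d - 1) * real (load n s t)) \<le> total_cost d T n s"
    unfolding total_cost_def by (intro sum_mono) auto
  moreover have "(\<Sum>t=1..T. real M powr (d - 1) * real (load n s t)) = real M powr (d - 1) * real n"
  proof -
    have "(\<Sum>t=1..T. load n s t) = n" using assms(3) by (intro sum_load) auto
    then have "(\<Sum>t=1..T. real (load n s t)) = real n" by (metis of_nat_sum)
    then show ?thesis by (simp add: sum_distrib_left[symmetric])
  qed
  ultimately show ?thesis by simp
qed

lemma load_le: "load n s t \<le> n"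
  unfolding load_def by (rule order.trans[OF card_mono[of "{..<n}"]]) auto

definition g :: "nat \<Rightarrow> nat" where "g j = (LEAST k. j < k * (k + 1))"

lemma g_props: "j < g j * (g j + 1)" "1 \<le> g j" "(g j - 1) * g j \<le> j"
proof -
  have ex: "\<exists>k. j < k * (k + 1)" by (rule exI[of _ "j+1"]) simp
  show a: "j < g j * (g j + 1)" unfolding g_def by (rule LeastI_ex[OF ex])
  show b: "1 \<le> g j" using a by (cases "g j") auto
  have "\<not> j < (g j - 1) * (g j - 1 + 1)" unfolding g_def
    by (rule not_less_Least) (use b in \<open>simp add: g_def\<close>)
  then show "(g j - 1) * g j \<le> j" using b by simp
qed

lemma g_eq:
  assumes "1 \<le> k" "(k - 1) * k \<le> j" "j < k * (k + 1)"
  shows "g j = k"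
proof -
  have le: "g j \<le> k" unfolding g_def by (rule Least_le) (rule assms(3))
  have "\<not> g j < k"
  proof
    assume "g j < k"
    then have "g j \<le> k - 1" by simp
    then have "g j * (g j + 1) \<le> (k - 1) * k" using assms(1)
      by (metis Suc_diff_1 Suc_eq_plus1 add_le_mono1 less_le_trans mult_le_mono zero_less_one)
    then show False using g_props(1)[of j] assms(2) by simp
  qed
  then show ?thesis using le by simp
qed

lemma g_set: "1 \<le> k \<Longrightarrow> {j. g j = k} = {(k-1)*k..<k*(k+1)}"
  using g_props g_eq by auto

lemma card_g: "1 \<le> k \<Longrightarrow> card {j. g j = k} = 2 * k"
proof -
  assume k: "1 \<le> k"
  have "k * (k + 1) = (k - 1) * k + 2 * k" using k
    by (cases k) (auto simp: algebra_simps)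
  then show ?thesis using g_set[OF k] by simp
qed


lemma final_ineq:
  fixes d :: real and h :: nat
  assumes "0 < d" "d < 1" "1 \<le> h"
  shows "2 powr (d - 1) * real h powr (1 - d)
     \<le> real (2 * h) powr (d - 1) * real (h^2 + h) / real (h^2 + h) powr d"
proof -
  define H where "H = real h"
  have H: "1 \<le> H" using assms H_def by simp
  define N where "N = H^2 + H"
  have N: "real (h^2 + h) = N" unfolding N_def H_def by simp
  have Npos: "0 < N" using H N_def by (simp add: add_pos_pos)
  have "N / N powr d = N powr (1 - d)" using Npos by (simp add: powr_diff)
  moreover have "(H^2) powr (1 - d) \<le> N powr (1 - d)"
    using assms H N_def by (intro powr_mono2) auto
  moreover have "(H^2) powr (1 - d) = H powr (2 * (1 - d))"
  proof -
    have "H^2 = H powr (real 2)" using H by (subst powr_realpow) auto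
    then show ?thesis by (simp add: powr_powr)
  qed
  moreover have "real (2 * h) powr (d - 1) = 2 powr (d - 1) * H powr (d - 1)"
    unfolding H_def by (simp add: powr_mult)
  moreover have "H powr (d - 1) * H powr (2 * (1 - d)) = H powr (1 - d)"
    using H by (simp add: powr_add[symmetric] algebra_simps)
  ultimately have "2 powr (d - 1) * H powr (1 - d) \<le> real (2 * h) powr (d - 1) * (N / N powr d)"
    by (metis (no_types, lifting) mult.assoc mult_left_mono powr_ge_zero zero_le_mult_iff)
  then show ?thesis using N by (simp add: H_def)
qed

theorem lemma2:
  fixes d :: real
  assumes "0 < d" and "d < 1"
  shows "\<exists>K > 0. \<forall>h :: nat. h \<ge> 1 \<longrightarrow>
    (\<exists>T r dl s sopt. valid_game T (h^2 + h) r dl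
       \<and> is_nash d (h^2 + h) r dl s
       \<and> is_optimal d T (h^2 + h) r dl sopt
       \<and> total_cost d T (h^2 + h) s / total_cost d T (h^2 + h) sopt
           \<ge> K * real h powr (1 - d))"
proof (intro exI[of _ "2 powr (d - 1)"] conjI allI impI)
  show "0 < (2::real) powr (d - 1)" by simp
  fix h :: nat assume h: "1 \<le> h"
  define n where "n = h^2 + h"
  have nh: "n = h * (h + 1)" unfolding n_def by (simp add: power2_eq_square algebra_simps)
  define T where "T = h + 3"
  define r :: "nat \<Rightarrow> nat" where "r = (\<lambda>j. 1)"
  define dl where "dl = (\<lambda>j. g j + 2)"
  define s where "s = (\<lambda>j. g j + 1)"
  define sopt :: "nat \<Rightarrow> nat" where "sopt = (\<lambda>j. 1)"
  have gh: "g j \<le> h" if "j < n" for j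
    unfolding g_def by (rule Least_le) (use that nh in simp)
  have g1: "1 \<le> g j" for j by (rule g_props)
  have vg: "valid_game T n r dl"
    unfolding valid_game_def T_def r_def dl_def using gh by fastforce
  have load_up: "load n s t \<le> 2 * (t - 1)" for t
  proof -
    have sub: "{j. j < n \<and> s j = t} \<subseteq> {j. g j = t - 1}" unfolding s_def by auto
    show ?thesis
    proof (cases "t - 1 = 0")
      case True
      have "\<forall>j. \<not> (j < n \<and> s j = t)"
      proof (intro allI notI)
        fix j assume "j < n \<and> s j = t"
        then have "g j = t - 1" by (auto simp: s_def)
        then show False using True g1[of j] by simp
      qed
      then have "{j. j < n \<and> s j = t} = {}" by blast
      then have "load n s t = 0" unfolding load_def by (metis card.empty)
      then show ?thesis by simp
    next
      case False
      have "finite {j. g j = t - 1}" using g_set[of "t-1"] False by simp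
      then have "load n s t \<le> card {j. g j = t - 1}" unfolding load_def
        using sub card_mono by blast
      then show ?thesis using card_g[of "t-1"] False by simp
    qed
  qed
  have load_eq: "load n s (s j) = 2 * g j" if "j < n" for j
  proof -
    have "{j'. j' < n \<and> s j' = s j} = {j'. g j' = g j}"
    proof safe
      fix j' assume "g j' = g j"
      then show "j' < n" using g_props(1)[of j'] gh[OF that] nh
        by (metis add_le_mono1 less_le_trans mult_le_mono)
    qed (auto simp: s_def)
    then show ?thesis unfolding load_def using card_g[OF g1] by simp
  qed
  have asg: "is_assignment n r dl s" unfolding is_assignment_def r_def dl_def s_def by auto
  have nash: "is_nash d n r dl s"
    unfolding is_nash_def
  proof (intro conjI asg allI impI)
    fix j t assume j: "j < n" and t: "t \<noteq> s j \<and> r j \<le> t \<and> t < dl j"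
    have "t \<le> g j" using t unfolding s_def r_def dl_def by auto
    then have lt: "load n s t + 1 \<le> 2 * g j" using load_up[of t] g1[of j] by linarith
    have L: "load n s (s j) = 2 * g j" using load_eq j by simp
    have pos: "0 < 2 * g j" using g1[of j] by simp
    have "cst d (2 * g j) / real (2 * g j) = real (2 * g j) powr (d - 1)"
      using pos by (simp add: cst_def powr_diff)
    moreover have "cst d (load n s t + 1) / real (load n s t + 1) = real (load n s t + 1) powr (d - 1)"
      by (simp add: cst_def powr_diff del: of_nat_Suc)
    moreover have "real (2 * g j) powr (d - 1) \<le> real (load n s t + 1) powr (d - 1)"
      using assms lt by (intro powr_mono2') auto
    ultimately show "cst d (load n s (s j)) / real (load n s (s j))
          \<le> cst d (load n s t + 1) / real (load n s t + 1)" using L by simp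
  qed
  have npos: "0 < n" using h nh by simp
  have loadopt: "load n sopt t = (if t = 1 then n else 0)" for t
    unfolding load_def sopt_def by auto
  have costopt: "total_cost d T n sopt = real n powr d"
  proof -
    have "total_cost d T n sopt = (\<Sum>t\<in>{1..T}. if t = 1 then cst d n else 0)"
      unfolding total_cost_def loadopt by (intro sum.cong) (auto simp: cst_def)
    also have "\<dots> = cst d n" using T_def by simp
    finally show ?thesis using npos by (simp add: cst_def)
  qed
  have opt: "is_optimal d T n r dl sopt"
    unfolding is_optimal_def
  proof (intro conjI allI impI)
    show "is_assignment n r dl sopt"
      unfolding is_assignment_def r_def sopt_def dl_def by simp
    fix s' assume as: "is_assignment n r dl s'"
    have "real n powr (d - 1) * real n \<le> total_cost d T n s'"
    proof (rule cost_lb[OF assms])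
      show "\<forall>j<n. 1 \<le> s' j \<and> s' j \<le> T" using as vg
        unfolding is_assignment_def valid_game_def r_def by (meson less_trans less_imp_le)
      show "\<forall>j<n. load n s' (s' j) \<le> n" using load_le by auto
    qed (rule npos)
    moreover have "real n powr (d - 1) * real n = real n powr d"
      using npos by (simp add: powr_diff)
    ultimately show "total_cost d T n sopt \<le> total_cost d T n s'" using costopt by simp
  qed
  have necost: "real (2 * h) powr (d - 1) * real n \<le> total_cost d T n s"
  proof (rule cost_lb[OF assms])
    show "\<forall>j<n. 1 \<le> s j \<and> s j \<le> T" using gh unfolding s_def T_def by fastforce
    show "\<forall>j<n. load n s (s j) \<le> 2 * h" using load_eq gh by auto
  qed (use h in simp)
  have "2 powr (d - 1) * real h powr (1 - d)
     \<le> real (2 * h) powr (d - 1) * real n / real n powr d"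
    using final_ineq[OF assms h] n_def by simp
  also have "\<dots> \<le> total_cost d T n s / total_cost d T n sopt"
    unfolding costopt using necost npos by (intro divide_right_mono) auto
  finally show "\<exists>T r dl s sopt. valid_game T (h^2 + h) r dl
       \<and> is_nash d (h^2 + h) r dl s
       \<and> is_optimal d T (h^2 + h) r dl sopt
       \<and> total_cost d T (h^2 + h) s / total_cost d T (h^2 + h) sopt
           \<ge> 2 powr (d - 1) * real h powr (1 - d)"
    using vg nash opt unfolding n_def by blast
qed

end
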